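(* If $J$ is a left (respectively, right) ideal in a C*-algebra, then $J$ possesses a contractive quasi-identity if and only if $J$ has a contractive right (respectively, left) identity. In this case, the contractive right (respectively, left) identity is the only contractive quasi-identity of $J$.
   Context: A quasi-identity of a ring $R$ is an element $e\in R$ with $r=er+re-ere$ for all $r\in R$; it is contractive if $\|e\|\le1$. Ideals are norm-closed. *)

theory Defs
  imports "HOL-Analysis.Analysis"
begin

text \<open>A (not necessarily unital) C*-algebra: a complete normed associative real algebra
  (type class), equipped with a compatible complex scalar multiplication scaleC and an
  involution star satisfying the C*-identity.\<close>

locale cstar_algebra =
  fixes scaleC :: "complex \<Rightarrow> 'a::{real_normed_algebra, banach} \<Rightarrow> 'a"
    and star :: "'a \<Rightarrow> 'a"
  assumes scaleC_add_right: "scaleC c (x + y) = scaleC c x + scaleC c y"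
    and scaleC_add_left: "scaleC (a + b) x = scaleC a x + scaleC b x"
    and scaleC_scaleC: "scaleC a (scaleC b x) = scaleC (a * b) x"
    and scaleC_of_real: "scaleC (complex_of_real r) x = scaleR r x"
    and norm_scaleC: "norm (scaleC c x) = cmod c * norm x"
    and mult_scaleC_left: "scaleC c x * y = scaleC c (x * y)"
    and mult_scaleC_right: "x * scaleC c y = scaleC c (x * y)"
    and star_add: "star (x + y) = star x + star y"
    and star_scaleC: "star (scaleC c x) = scaleC (cnj c) (star x)"
    and star_mult: "star (x * y) = star y * star x"
    and star_star: "star (star x) = x"
    and cstar_id: "norm (star x * x) = (norm x)\<^sup>2"

definition closed_csubspace :: "(complex \<Rightarrow> 'a::real_normed_vector \<Rightarrow> 'a) \<Rightarrow> 'a set \<Rightarrow> bool" where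
  "closed_csubspace scaleC J \<longleftrightarrow> closed J \<and> 0 \<in> J \<and>
     (\<forall>x\<in>J. \<forall>y\<in>J. x + y \<in> J) \<and> (\<forall>c. \<forall>x\<in>J. scaleC c x \<in> J)"

definition left_ideal :: "(complex \<Rightarrow> 'a::real_normed_algebra \<Rightarrow> 'a) \<Rightarrow> 'a set \<Rightarrow> bool" where
  "left_ideal scaleC J \<longleftrightarrow> closed_csubspace scaleC J \<and> (\<forall>a. \<forall>x\<in>J. a * x \<in> J)"

definition right_ideal :: "(complex \<Rightarrow> 'a::real_normed_algebra \<Rightarrow> 'a) \<Rightarrow> 'a set \<Rightarrow> bool" where
  "right_ideal scaleC J \<longleftrightarrow> closed_csubspace scaleC J \<and> (\<forall>a. \<forall>x\<in>J. x * a \<in> J)"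

definition quasi_identity :: "'a::ring set \<Rightarrow> 'a \<Rightarrow> bool" where
  "quasi_identity J e \<longleftrightarrow> e \<in> J \<and> (\<forall>r\<in>J. r = e * r + r * e - e * r * e)"

definition right_identity :: "'a::ring set \<Rightarrow> 'a \<Rightarrow> bool" where
  "right_identity J e \<longleftrightarrow> e \<in> J \<and> (\<forall>r\<in>J. r * e = r)"

definition left_identity :: "'a::ring set \<Rightarrow> 'a \<Rightarrow> bool" where
  "left_identity J e \<longleftrightarrow> e \<in> J \<and> (\<forall>r\<in>J. e * r = r)"

end

theory Submission
  imports Defs
begin

lemma ring_aux_sq: "((a::'a::ring) - a * s) * (y - s * y) = a * y - a * (s + s - s * s) * y"
  by (simp add: left_diff_distrib right_diff_distrib distrib_left distrib_right mult.assoc)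

lemma ring_aux_sq2: "((s::'a::ring) + s - s * s) * y = y + ((s * y - y) - s * (s * y - y))"
  by (simp add: left_diff_distrib right_diff_distrib distrib_left distrib_right mult.assoc)

lemma ring_aux_l: "(A::'a::ring) = e*A + A*e - e*A*e \<Longrightarrow> e*(A - A*e) = A - A*e"
proof -
  assume h: "A = e*A + A*e - e*A*e"
  have "A - A*e = (e*A + A*e - e*A*e) - A*e" using arg_cong[OF h, of "\<lambda>z. z - A*e"] .
  also have "\<dots> = e*(A - A*e)" by (simp add: right_diff_distrib mult.assoc)
  finally show ?thesis by simp
qed

lemma ring_aux_r: "(A::'a::ring) = e*A + A*e - e*A*e \<Longrightarrow> (A - e*A)*e = A - e*A"
proof -
  assume h: "A = e*A + A*e - e*A*e"
  have "A - e*A = (e*A + A*e - e*A*e) - e*A" using arg_cong[OF h, of "\<lambda>z. z - e*A"] .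
  also have "\<dots> = (A - e*A)*e" by (simp add: left_diff_distrib mult.assoc)
  finally show ?thesis by simp
qed

context cstar_algebra
begin

lemma star_zero: "star 0 = 0"
  using star_add[of 0 0] by simp

lemma star_uminus: "star (- x) = - star x"
  using star_add[of x "- x"] star_zero by (metis add.inverse_unique add.right_inverse)

lemma star_diff: "star (x - y) = star x - star y"
  using star_add[of x "- y"] star_uminus[of y] by simp

lemma star_scaleR: "star (scaleR r x) = scaleR r (star x)"
proof -
  have "star (scaleR r x) = star (scaleC (complex_of_real r) x)" by (simp add: scaleC_of_real)
  also have "\<dots> = scaleC (complex_of_real r) (star x)" by (simp add: star_scaleC)
  finally show ?thesis by (simp add: scaleC_of_real)
qed

lemma norm_star_le: "norm x \<le> norm (star x)"
proof (cases "x = 0")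
  case True then show ?thesis by simp
next
  case False
  have "(norm x)^2 \<le> norm (star x) * norm x"
    using cstar_id[of x] norm_mult_ineq[of "star x" x] by simp
  then show ?thesis using False by (simp add: power2_eq_square)
qed

lemma norm_star: "norm (star x) = norm x"
  using norm_star_le[of x] norm_star_le[of "star x"] star_star[of x] by simp

lemma star_cont: "continuous_on UNIV star"
proof -
  have "bounded_linear star"
    by (rule bounded_linear_intro[where K=1]) (auto simp: star_add star_scaleR norm_star)
  then show ?thesis by (simp add: linear_continuous_on)
qed

lemma sqrt_exists:
  assumes hs: "star h = h" and hn: "norm h \<le> 1" and r0: "0 \<le> \<rho>" and r1: "\<rho> < 1"
  shows "\<exists>s. star s = s \<and> norm s \<le> \<rho> \<and>
           scaleR 2 s - s * s = scaleR (2*\<rho> - \<rho>^2) h"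
proof -
  define t where "t = 2*\<rho> - \<rho>^2"
  have t0: "0 \<le> t" using r0 r1 unfolding t_def
    using mult_nonneg_nonneg[of \<rho> "2 - \<rho>"] by (simp add: power2_eq_square algebra_simps)
  define S where "S = {x. star x = x} \<inter> {x. norm x \<le> \<rho>}"
  define f where "f x = scaleR (1/2) (scaleR t h + x * x)" for x
  have cS: "closed S" unfolding S_def
    by (intro closed_Int closed_Collect_eq closed_Collect_le star_cont continuous_intros)
  have "complete S" using cS by (simp add: complete_eq_closed)
  moreover have "S \<noteq> {}" using r0 star_zero unfolding S_def by auto
  moreover have "f ` S \<subseteq> S"
  proof
    fix y assume "y \<in> f ` S"
    then obtain x where x: "x \<in> S" "y = f x" by auto
    have "star y = y" using x unfolding S_def f_def
      by (simp add: star_scaleR star_add star_mult hs)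
    moreover have "norm y \<le> \<rho>"
    proof -
      have "norm (scaleR t h + x * x) \<le> t * norm h + norm x * norm x"
        using norm_triangle_ineq[of "scaleR t h" "x*x"] norm_mult_ineq[of x x] t0 by simp
      also have "\<dots> \<le> t + \<rho> * \<rho>"
        using x hn t0 r0 unfolding S_def by (intro add_mono mult_mono) (auto intro: mult_left_le)
      also have "\<dots> = 2 * \<rho>" unfolding t_def by (simp add: power2_eq_square)
      finally show ?thesis using x unfolding f_def by simp
    qed
    ultimately show "y \<in> S" unfolding S_def by auto
  qed
  moreover have "dist (f x) (f y) \<le> \<rho> * dist x y" if "x \<in> S" "y \<in> S" for x y
  proof -
    have "f x - f y = scaleR (1/2) (x * x - y * y)" unfolding f_def by (simp add: algebra_simps)
    also have "x * x - y * y = (x - y) * x + y * (x - y)" by (simp add: algebra_simps)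
    finally have "norm (f x - f y) \<le> (1/2) * (norm (x - y) * norm x + norm y * norm (x - y))"
      using norm_triangle_ineq[of "(x - y) * x" "y * (x - y)"]
        norm_mult_ineq[of "x - y" x] norm_mult_ineq[of y "x - y"] by simp
    also have "\<dots> \<le> (1/2) * (norm (x - y) * \<rho> + \<rho> * norm (x - y))"
      using that r0 unfolding S_def by (intro mult_left_mono add_mono mult_mono) auto
    finally show ?thesis by (simp add: dist_norm algebra_simps)
  qed
  ultimately obtain s where s: "s \<in> S" "f s = s" using Banach_fix[of S \<rho> f] r0 r1 by blast
  have "scaleR 2 s = scaleR t h + s * s"
    using arg_cong[OF s(2), of "scaleR 2"] unfolding f_def by simp
  then have "scaleR 2 s - s * s = scaleR t h" by simp
  then show ?thesis using s(1) unfolding S_def t_def by auto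
qed

lemma hfix_bound:
  assumes hs: "star h = h" and hn: "norm h \<le> 1" and hy: "star y * h * y = star y * y"
    and r0: "0 \<le> \<rho>" and r1: "\<rho> < 1"
  shows "norm (h * y - y) \<le> (1 - \<rho>) * (norm (h * y) + 2 * norm y)"
proof -
  obtain s where ss: "star s = s" and sn: "norm s \<le> \<rho>"
    and se: "scaleR 2 s - s * s = scaleR (2*\<rho> - \<rho>^2) h"
    using sqrt_exists[OF hs hn r0 r1] by blast
  define t where "t = 2*\<rho> - \<rho>^2"
  have t1: "1 - t = (1 - \<rho>)^2" unfolding t_def by (simp add: power2_eq_square algebra_simps)
  define w where "w = y - s * y"
  have sw: "star w = star y - star y * s" unfolding w_def by (simp add: star_diff star_mult ss)
  have "star w * w = (star y - star y * s) * (y - s * y)"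
    unfolding sw by (simp add: w_def)
  also have "\<dots> = star y * y - star y * (s + s - s * s) * y"
    by (rule ring_aux_sq)
  also have "s + s - s * s = scaleR t h" using se unfolding t_def by (simp add: scaleR_2)
  also have "star y * y - star y * scaleR t h * y = scaleR (1 - t) (star y * y)"
    using hy by (simp add: algebra_simps)
  finally have "(norm w)^2 = (1 - \<rho>)^2 * (norm y)^2"
    using cstar_id[of w] cstar_id[of y] t1 by simp
  then have w2: "(norm w)^2 = ((1 - \<rho>) * norm y)^2" by (simp only: power_mult_distrib)
  have nn: "0 \<le> (1 - \<rho>) * norm y" using r1 by simp
  have wn: "norm w = (1 - \<rho>) * norm y"
    by (rule power2_eq_imp_eq[OF w2 norm_ge_zero nn])
  define d where "d = s * y - y"
  have dn: "norm d = (1 - \<rho>) * norm y" using wn unfolding d_def w_def by (simp add: norm_minus_commute)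
  have "scaleR t (h * y) = (scaleR 2 s - s * s) * y" using se unfolding t_def by simp
  also have "\<dots> = y + (d - s * d)" unfolding d_def scaleR_2 by (rule ring_aux_sq2)
  finally have e1: "scaleR t (h * y) - y = d - s * d" by simp
  have "norm (d - s * d) \<le> norm d + norm s * norm d"
    using norm_triangle_ineq4[of d "s * d"] norm_mult_ineq[of s d] by simp
  also have "\<dots> \<le> norm d + 1 * norm d" using sn r1 by (intro add_left_mono mult_right_mono) auto
  finally have n0: "norm (d - s * d) \<le> 2 * norm d" by simp
  have n1: "norm (scaleR t (h * y) - y) \<le> 2 * (1 - \<rho>) * norm y" unfolding e1 using n0 dn by (metis mult.assoc)
  have "h * y - y = scaleR (1 - t) (h * y) + (scaleR t (h * y) - y)" by (simp add: algebra_simps)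
  then have "norm (h * y - y) \<le> norm (scaleR (1 - t) (h * y)) + norm (scaleR t (h * y) - y)"
    by (metis norm_triangle_ineq)
  also have "norm (scaleR (1 - t) (h * y)) = (1 - \<rho>)^2 * norm (h * y)" using t1 by simp
  also have "(1 - \<rho>)^2 * norm (h * y) \<le> (1 - \<rho>) * norm (h * y)"
    using r0 r1 by (intro mult_right_mono) (auto simp: power2_eq_square)
  finally show ?thesis using n1 by (simp add: algebra_simps)
qed

lemma hfix:
  assumes hs: "star h = h" and hn: "norm h \<le> 1" and hy: "star y * h * y = star y * y"
  shows "h * y = y"
proof (rule ccontr)
  assume "h * y \<noteq> y"
  define D where "D = norm (h * y - y)"
  define C where "C = norm (h * y) + 2 * norm y"
  have D0: "D > 0" using \<open>h * y \<noteq> y\<close> unfolding D_def by simp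
  have C0: "C \<ge> 0" unfolding C_def by simp
  define \<epsilon> where "\<epsilon> = D / (C + D)"
  have e0: "0 < \<epsilon>" "\<epsilon> \<le> 1" using D0 C0 unfolding \<epsilon>_def by auto
  have "D \<le> (1 - (1 - \<epsilon>)) * C"
    unfolding D_def C_def using hfix_bound[OF hs hn hy, of "1 - \<epsilon>"] e0 by simp
  then have "D \<le> D * C / (C + D)" unfolding \<epsilon>_def by simp
  then have "D * (C + D) \<le> D * C" using D0 C0 by (simp add: le_divide_eq)
  then have "D * D \<le> 0" by (simp add: algebra_simps)
  then show False using D0 by (metis mult_pos_pos not_le)
qed

lemma fix_star:
  assumes en: "norm e \<le> 1" and ey: "e * y = y"
  shows "star e * y = y"
proof -
  define h where "h = scaleR (1/2) (e + star e)"
  have hs: "star h = h" unfolding h_def by (simp add: star_scaleR star_add star_star add.commute)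
  have "norm h \<le> (1/2) * (norm e + norm (star e))"
    unfolding h_def using norm_triangle_ineq[of e "star e"] by simp
  then have hn: "norm h \<le> 1" using en norm_star[of e] by simp
  have sy: "star y * star e = star y" using ey star_mult[of e y] by simp
  have "star y * h * y = scaleR (1/2) (star y * e * y + star y * star e * y)"
    unfolding h_def by (simp add: algebra_simps)
  also have "\<dots> = star y * y"
  proof -
    have "star y * e * y = star y * y" using ey by (simp add: mult.assoc)
    moreover have "star y * star e * y = star y * y" using sy by simp
    ultimately show ?thesis by (simp add: scaleR_2[symmetric])
  qed
  finally have "h * y = y" using hfix[OF hs hn] by blast
  then have "scaleR (1/2) (e * y + star e * y) = y" unfolding h_def by (simp add: algebra_simps)
  then have "scaleR 2 (scaleR (1/2) (e * y + star e * y)) = scaleR 2 y" by simp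
  then have "e * y + star e * y = scaleR 2 y" by simp
  then show ?thesis using ey by (simp add: scaleR_2)
qed

lemma fix_star_right:
  assumes en: "norm e \<le> 1" and ye: "y * e = y"
  shows "y * star e = y"
proof -
  have "star e * star y = star y" using ye star_mult[of y e] by simp
  then have "star (star e) * star y = star y" using fix_star[of "star e" "star y"] en norm_star[of e] by simp
  then have "star (star (star e) * star y) = star (star y)" by simp
  then show ?thesis by (simp add: star_mult star_star)
qed

lemma star_eq_0: "star g * g = 0 \<Longrightarrow> g = 0"
  using cstar_id[of g] by simp

lemma left_qi_imp_rid:
  fixes J :: "'a set"
  assumes li: "\<forall>a. \<forall>x\<in>J. a * x \<in> J" and qi: "quasi_identity J e" and en: "norm e \<le> 1"
  shows "right_identity J e"
  unfolding right_identity_def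
proof (intro conjI ballI)
  show "e \<in> J" using qi unfolding quasi_identity_def by blast
  fix r assume r: "r \<in> J"
  define g where "g = r - r * e"
  define y where "y = star r * g"
  have "star r * r \<in> J" using li r by blast
  then have "star r * r = e * (star r * r) + star r * r * e - e * (star r * r) * e"
    using qi unfolding quasi_identity_def by blast
  note ring_aux_l[OF this]
  then have "e * y = y" unfolding y_def g_def
    by (simp add: right_diff_distrib mult.assoc)
  then have "star e * y = y" using fix_star en by blast
  then have "star (star e * y) = star y" by simp
  then have "star g * r * e = star g * r" unfolding y_def by (simp add: star_mult star_star mult.assoc)
  then have "star g * g = 0" unfolding g_def
    by (simp add: right_diff_distrib mult.assoc[symmetric])
  then have "g = 0" by (rule star_eq_0)
  then show "r * e = r" unfolding g_def by simp
qed

lemma right_qi_imp_lid: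
  fixes J :: "'a set"
  assumes ri: "\<forall>a. \<forall>x\<in>J. x * a \<in> J" and qi: "quasi_identity J e" and en: "norm e \<le> 1"
  shows "left_identity J e"
  unfolding left_identity_def
proof (intro conjI ballI)
  show "e \<in> J" using qi unfolding quasi_identity_def by blast
  fix r assume r: "r \<in> J"
  define g where "g = r - e * r"
  define y where "y = g * star r"
  have "r * star r \<in> J" using ri r by blast
  then have "r * star r = e * (r * star r) + r * star r * e - e * (r * star r) * e"
    using qi unfolding quasi_identity_def by blast
  note ring_aux_r[OF this]
  then have "y * e = y" unfolding y_def g_def
    by (simp add: left_diff_distrib mult.assoc)
  then have "y * star e = y" using fix_star_right en by blast
  then have "star (y * star e) = star y" by simp
  then have "e * r * star g = r * star g" unfolding y_def by (simp add: star_mult star_star mult.assoc)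
  then have "star (star g) * star g = 0" unfolding star_star unfolding g_def
    by (simp add: left_diff_distrib mult.assoc)
  then have "star g = 0" by (rule star_eq_0)
  then have "g = 0" using star_star[of g] star_zero by simp
  then show "e * r = r" unfolding g_def by simp
qed

lemma proj_of_rid:
  fixes J :: "'a set"
  assumes "right_identity J e" "norm e \<le> 1"
  shows "star e = e"
proof -
  have "e * e = e" using assms(1) unfolding right_identity_def by blast
  then have h: "star e * e = e" using fix_star assms(2) by blast
  have "star e = star (star e * e)" using h by simp
  also have "\<dots> = star e * e" by (simp add: star_mult star_star)
  finally show ?thesis using h by simp
qed

lemma proj_of_lid:
  fixes J :: "'a set"
  assumes "left_identity J e" "norm e \<le> 1"
  shows "star e = e"
proof -
  have "e * e = e" using assms(1) unfolding left_identity_def by blast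
  then have h: "e * star e = e" using fix_star_right assms(2) by blast
  have "star e = star (e * star e)" using h by simp
  also have "\<dots> = e * star e" by (simp add: star_mult star_star)
  finally show ?thesis using h by simp
qed

lemma left_part:
  fixes J :: "'a set"
  assumes "left_ideal scaleC J"
  shows "((\<exists>e. quasi_identity J e \<and> norm e \<le> 1) \<longleftrightarrow>
             (\<exists>f. right_identity J f \<and> norm f \<le> 1)) \<and>
            (\<forall>e f. right_identity J f \<and> norm f \<le> 1 \<and> quasi_identity J e \<and> norm e \<le> 1
                   \<longrightarrow> e = f)"
proof -
  have li: "\<forall>a. \<forall>x\<in>J. a * x \<in> J" using assms unfolding left_ideal_def by blast
  have qi: "quasi_identity J f" if "right_identity J f" for f
    using that unfolding right_identity_def quasi_identity_def by (simp add: mult.assoc)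
  have uq: "e = f" if "right_identity J f" "norm f \<le> 1" "quasi_identity J e" "norm e \<le> 1" for e f
  proof -
    have re: "right_identity J e" using left_qi_imp_rid[OF li that(3,4)] .
    have se: "star e = e" using proj_of_rid[OF re that(4)] .
    have sf: "star f = f" using proj_of_rid[OF that(1,2)] .
    have h1: "e * f = e" using re that(1) unfolding right_identity_def by blast
    have h2: "f * e = f" using re that(1) unfolding right_identity_def by blast
    have "e = star e" using se by simp
    also have "\<dots> = star (e * f)" using h1 by simp
    also have "\<dots> = f * e" using se sf by (simp add: star_mult)
    finally show ?thesis using h2 by simp
  qed
  show ?thesis
    using left_qi_imp_rid[OF li] qi uq by blast
qed

lemma right_part:
  fixes J :: "'a set"
  assumes "right_ideal scaleC J"
  shows "((\<exists>e. quasi_identity J e \<and> norm e \<le> 1) \<longleftrightarrow>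
             (\<exists>f. left_identity J f \<and> norm f \<le> 1)) \<and>
            (\<forall>e f. left_identity J f \<and> norm f \<le> 1 \<and> quasi_identity J e \<and> norm e \<le> 1
                   \<longrightarrow> e = f)"
proof -
  have ri: "\<forall>a. \<forall>x\<in>J. x * a \<in> J" using assms unfolding right_ideal_def by blast
  have qi: "quasi_identity J f" if "left_identity J f" for f
    using that unfolding left_identity_def quasi_identity_def by (simp add: mult.assoc[symmetric])
  have uq: "e = f" if "left_identity J f" "norm f \<le> 1" "quasi_identity J e" "norm e \<le> 1" for e f
  proof -
    have re: "left_identity J e" using right_qi_imp_lid[OF ri that(3,4)] .
    have se: "star e = e" using proj_of_lid[OF re that(4)] .
    have sf: "star f = f" using proj_of_lid[OF that(1,2)] .
    have h1: "f * e = e" using re that(1) unfolding left_identity_def by blast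
    have h2: "e * f = f" using re that(1) unfolding left_identity_def by blast
    have "e = star e" using se by simp
    also have "\<dots> = star (f * e)" using h1 by simp
    also have "\<dots> = e * f" using se sf by (simp add: star_mult)
    finally show ?thesis using h2 by simp
  qed
  show ?thesis
    using right_qi_imp_lid[OF ri] qi uq by blast
qed

end

theorem corollary4p6:
  fixes scaleC :: "complex \<Rightarrow> 'a::{real_normed_algebra, banach} \<Rightarrow> 'a"
    and star :: "'a \<Rightarrow> 'a"
    and J :: "'a set"
  assumes "cstar_algebra scaleC star"
  shows "(left_ideal scaleC J \<longrightarrow>
            ((\<exists>e. quasi_identity J e \<and> norm e \<le> 1) \<longleftrightarrow>
             (\<exists>f. right_identity J f \<and> norm f \<le> 1)) \<and>
            (\<forall>e f. right_identity J f \<and> norm f \<le> 1 \<and> quasi_identity J e \<and> norm e \<le> 1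
                   \<longrightarrow> e = f))
       \<and> (right_ideal scaleC J \<longrightarrow>
            ((\<exists>e. quasi_identity J e \<and> norm e \<le> 1) \<longleftrightarrow>
             (\<exists>f. left_identity J f \<and> norm f \<le> 1)) \<and>
            (\<forall>e f. left_identity J f \<and> norm f \<le> 1 \<and> quasi_identity J e \<and> norm e \<le> 1
                   \<longrightarrow> e = f))"
  using cstar_algebra.left_part[OF assms] cstar_algebra.right_part[OF assms] by blast

end
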